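(* Let $(G,<_X,k)$ be an instance of \textsc{One-Sided $k$-Planarity} with $G=(X\cup Y,E)$. If $G$ contains a vertex $v\in X$ with $\deg(v)>2k+2$ that has a leaf neighbor $y\in Y$, then $(G,<_X,k)$ is a YES-instance if and only if $(G-y,<_X,k)$ is a YES-instance.
   Context: A leaf is a vertex with exactly one neighbor. A 2-layer drawing of a bipartite graph $G=(X\cup Y,E)$ ($X\cap Y=\emptyset$, $E\subseteq X\times Y$) is a pair $(<_X,<_Y)$ of strict linear orders on $X$ and $Y$. Edges $\{x,y\},\{x',y'\}$ with $x\ne x'\in X$, $y\ne y'\in Y$ cross if $x<_Xx'$ and $y'<_Yy$. The drawing is $k$-planar if every edge crosses at most $k$ edges. \textsc{One-Sided $k$-Planarity}: given a bipartite graph $(X\cup Y,E)$, an integer $k\ge0$ and a linear order $<_X$ of $X$, decide whether there is a linear order $<_Y$ of $Y$ with $(<_X,<_Y)$ a 2-layer $k$-planar drawing; a YES-instance is one for which the answer is yes. *)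

theory Defs
  imports Main
begin

definition bip_graph :: "'a set \<Rightarrow> 'a set \<Rightarrow> ('a \<times> 'a) set \<Rightarrow> bool" where
  "bip_graph X Y E \<longleftrightarrow> finite X \<and> finite Y \<and> X \<inter> Y = {} \<and> E \<subseteq> X \<times> Y"

definition crosses :: "'a rel \<Rightarrow> 'a rel \<Rightarrow> ('a \<times> 'a) \<Rightarrow> ('a \<times> 'a) \<Rightarrow> bool" where
  "crosses ordX ordY e e' \<longleftrightarrow>
     ((fst e, fst e') \<in> ordX \<and> (snd e', snd e) \<in> ordY) \<or>
     ((fst e', fst e) \<in> ordX \<and> (snd e, snd e') \<in> ordY)"

definition k_planar :: "('a \<times> 'a) set \<Rightarrow> nat \<Rightarrow> 'a rel \<Rightarrow> 'a rel \<Rightarrow> bool" where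
  "k_planar E k ordX ordY \<longleftrightarrow>
     (\<forall>e\<in>E. card {e'\<in>E. crosses ordX ordY e e'} \<le> k)"

definition one_sided_k_planar :: "'a set \<Rightarrow> 'a set \<Rightarrow> ('a \<times> 'a) set \<Rightarrow> 'a rel \<Rightarrow> nat \<Rightarrow> bool" where
  "one_sided_k_planar X Y E ordX k \<longleftrightarrow>
     (\<exists>ordY. ordY \<subseteq> Y \<times> Y \<and> strict_linear_order_on Y ordY \<and> k_planar E k ordX ordY)"

definition degree :: "('a \<times> 'a) set \<Rightarrow> 'a \<Rightarrow> nat" where
  "degree E v = card ({y. (v, y) \<in> E} \<union> {x. (x, v) \<in> E})"

definition is_leaf :: "('a \<times> 'a) set \<Rightarrow> 'a \<Rightarrow> bool" where
  "is_leaf E v \<longleftrightarrow> degree E v = 1"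

end

theory Submission
  imports Defs
begin

lemma slo_unfold:
  "strict_linear_order_on A r \<longleftrightarrow> trans r \<and> (\<forall>a. (a,a) \<notin> r) \<and> (\<forall>a\<in>A. \<forall>b\<in>A. a \<noteq> b \<longrightarrow> (a,b) \<in> r \<or> (b,a) \<in> r)"
  unfolding strict_linear_order_on_def irrefl_def total_on_def by blast

lemma fwd:
  assumes bip: "bip_graph X Y E" and op: "one_sided_k_planar X Y E ordX k"
  shows "one_sided_k_planar X (Y - {y}) {e \<in> E. snd e \<noteq> y} ordX k"
proof -
  obtain R where R: "R \<subseteq> Y \<times> Y" "strict_linear_order_on Y R" "k_planar E k ordX R"
    using op unfolding one_sided_k_planar_def by blast
  let ?R = "R \<inter> ((Y-{y}) \<times> (Y-{y}))"
  have finE: "finite E" using bip unfolding bip_graph_def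
    by (meson finite_SigmaI finite_subset)
  have "strict_linear_order_on (Y-{y}) ?R" using R(2) unfolding slo_unfold trans_def by blast
  moreover have "k_planar {e \<in> E. snd e \<noteq> y} k ordX ?R" unfolding k_planar_def
  proof
    fix e assume e: "e \<in> {e \<in> E. snd e \<noteq> y}"
    have "{e' \<in> {e \<in> E. snd e \<noteq> y}. crosses ordX ?R e e'} \<subseteq> {e' \<in> E. crosses ordX R e e'}"
      by (auto simp: crosses_def)
    hence "card {e' \<in> {e \<in> E. snd e \<noteq> y}. crosses ordX ?R e e'} \<le> card {e' \<in> E. crosses ordX R e e'}"
      by (rule card_mono[rotated]) (use finE in auto)
    also have "\<dots> \<le> k" using R(3) e unfolding k_planar_def by auto
    finally show "card {e' \<in> {e \<in> E. snd e \<noteq> y}. crosses ordX ?R e e'} \<le> k" .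
  qed
  ultimately show ?thesis unfolding one_sided_k_planar_def by blast
qed

lemma bwd:
  assumes bip: "bip_graph X Y E" and oX: "strict_linear_order_on X ordX" and v: "v \<in> X"
    and Ncard: "card ({b. (v,b) \<in> E} - {y}) \<ge> 2*k+2"
    and leaf: "\<And>x. (x,y) \<in> E \<Longrightarrow> x = v" and vy: "(v,y) \<in> E" and y: "y \<in> Y"
    and op: "one_sided_k_planar X (Y - {y}) {e \<in> E. snd e \<noteq> y} ordX k"
  shows "one_sided_k_planar X Y E ordX k"
proof -
  obtain R where R: "R \<subseteq> (Y-{y}) \<times> (Y-{y})" "strict_linear_order_on (Y-{y}) R"
      "k_planar {e \<in> E. snd e \<noteq> y} k ordX R"
    using op unfolding one_sided_k_planar_def by blast
  define Y' where "Y' = Y - {y}"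
  define E' where "E' = {e \<in> E. snd e \<noteq> y}"
  define N where "N = {b. (v,b) \<in> E} - {y}"
  have finE: "finite E" using bip unfolding bip_graph_def
    by (meson finite_SigmaI finite_subset)
  have EXY: "E \<subseteq> X \<times> Y" and XY: "X \<inter> Y = {}" using bip unfolding bip_graph_def by auto
  have finN: "finite N"
  proof -
    have "N \<subseteq> snd ` E" unfolding N_def by force
    thus ?thesis using finE finite_subset by blast
  qed
  have NY': "N \<subseteq> Y'" unfolding N_def Y'_def using EXY by auto
  have RY': "R \<subseteq> Y' \<times> Y'" using R(1) Y'_def by simp
  have Rt: "trans R" and Rirr: "\<And>a. (a,a) \<notin> R" and Rtot: "\<And>a b. a \<in> Y' \<Longrightarrow> b \<in> Y' \<Longrightarrow> a \<noteq> b \<Longrightarrow> (a,b) \<in> R \<or> (b,a) \<in> R"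
    using R(2) unfolding slo_unfold Y'_def by blast+
  have Xt: "\<And>a. (a,a) \<notin> ordX" using oX unfolding slo_unfold by blast
  have cr: "\<And>e. e \<in> E' \<Longrightarrow> card {e' \<in> E'. crosses ordX R e e'} \<le> k"
    using R(3) unfolding k_planar_def E'_def by blast
  have finE': "finite E'" unfolding E'_def using finE by simp
  have left: "card {b \<in> N. (b,z) \<in> R} \<le> k" if xz: "(x,z) \<in> E'" and xv: "(x,v) \<in> ordX" for x z
  proof -
    have "(\<lambda>b. (v,b)) ` {b \<in> N. (b,z) \<in> R} \<subseteq> {e' \<in> E'. crosses ordX R (x,z) e'}"
      using xv unfolding N_def E'_def crosses_def by auto
    hence "card ((\<lambda>b. (v,b)) ` {b \<in> N. (b,z) \<in> R}) \<le> card {e' \<in> E'. crosses ordX R (x,z) e'}"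
      by (rule card_mono[rotated]) (use finE' in auto)
    moreover have "card ((\<lambda>b. (v,b)) ` {b \<in> N. (b,z) \<in> R}) = card {b \<in> N. (b,z) \<in> R}"
      by (rule card_image) (auto simp: inj_on_def)
    ultimately show ?thesis using cr[OF xz] by linarith
  qed
  have right: "card {b \<in> N. (z,b) \<in> R} \<le> k" if xz: "(x,z) \<in> E'" and xv: "(v,x) \<in> ordX" for x z
  proof -
    have "(\<lambda>b. (v,b)) ` {b \<in> N. (z,b) \<in> R} \<subseteq> {e' \<in> E'. crosses ordX R (x,z) e'}"
      using xv unfolding N_def E'_def crosses_def by auto
    hence "card ((\<lambda>b. (v,b)) ` {b \<in> N. (z,b) \<in> R}) \<le> card {e' \<in> E'. crosses ordX R (x,z) e'}"
      by (rule card_mono[rotated]) (use finE' in auto)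
    moreover have "card ((\<lambda>b. (v,b)) ` {b \<in> N. (z,b) \<in> R}) = card {b \<in> N. (z,b) \<in> R}"
      by (rule card_image) (auto simp: inj_on_def)
    ultimately show ?thesis using cr[OF xz] by linarith
  qed
  define D where "D = {z \<in> Y'. card {b \<in> N. (b,z) \<in> R \<or> b = z} \<le> k+1}"
  have E'Y': "\<And>x z. (x,z) \<in> E' \<Longrightarrow> z \<in> Y'" unfolding E'_def Y'_def using EXY by auto
  have Dleft: "z \<in> D" if xz: "(x,z) \<in> E'" and xv: "(x,v) \<in> ordX" for x z
  proof -
    have "{b \<in> N. (b,z) \<in> R \<or> b = z} \<subseteq> insert z {b \<in> N. (b,z) \<in> R}" by auto
    hence "card {b \<in> N. (b,z) \<in> R \<or> b = z} \<le> card (insert z {b \<in> N. (b,z) \<in> R})"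
      by (rule card_mono[rotated]) (use finN in auto)
    also have "\<dots> \<le> card {b \<in> N. (b,z) \<in> R} + 1" using finN by (simp add: card_insert_if)
    finally show ?thesis using left[OF xz xv] E'Y'[OF xz] unfolding D_def by auto
  qed
  have Dright: "z \<notin> D" if xz: "(x,z) \<in> E'" and xv: "(v,x) \<in> ordX" for x z
  proof -
    have zY: "z \<in> Y'" using E'Y'[OF xz] .
    have sub: "N - {b \<in> N. (z,b) \<in> R} \<subseteq> {b \<in> N. (b,z) \<in> R \<or> b = z}"
      using Rtot zY NY' by blast
    have "card (N - {b \<in> N. (z,b) \<in> R}) = card N - card {b \<in> N. (z,b) \<in> R}"
      by (rule card_Diff_subset) (use finN in auto)
    also have "\<dots> \<ge> k + 2" using right[OF xz xv] Ncard unfolding N_def by linarith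
    finally have "k + 2 \<le> card (N - {b \<in> N. (z,b) \<in> R})" .
    also have "\<dots> \<le> card {b \<in> N. (b,z) \<in> R \<or> b = z}"
      by (rule card_mono[OF _ sub]) (use finN in auto)
    finally show ?thesis unfolding D_def by auto
  qed
  have Ddown: "a \<in> D" if ab: "(a,b) \<in> R" and bD: "b \<in> D" for a b
  proof -
    have "{c \<in> N. (c,a) \<in> R \<or> c = a} \<subseteq> {c \<in> N. (c,b) \<in> R \<or> c = b}"
      using ab Rt unfolding trans_def by blast
    hence "card {c \<in> N. (c,a) \<in> R \<or> c = a} \<le> card {c \<in> N. (c,b) \<in> R \<or> c = b}"
      by (rule card_mono[rotated]) (use finN in auto)
    thus ?thesis using bD ab RY' unfolding D_def by auto
  qed
  have yY': "y \<notin> Y'" unfolding Y'_def by simp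
  have DY': "D \<subseteq> Y'" unfolding D_def by auto
  define S where "S = R \<union> D \<times> {y} \<union> {y} \<times> (Y' - D)"
  have SY: "S \<subseteq> Y \<times> Y" unfolding S_def using RY' DY' y unfolding Y'_def by auto
  have acR: "(a,c) \<in> R" if ad: "a \<in> D" and cd: "c \<in> Y'" "c \<notin> D" for a c
  proof -
    have "a \<noteq> c" using ad cd by auto
    moreover have "a \<in> Y'" using ad DY' by auto
    ultimately have "(a,c) \<in> R \<or> (c,a) \<in> R" using Rtot cd by blast
    moreover have "(c,a) \<notin> R" using Ddown ad cd by blast
    ultimately show ?thesis by blast
  qed
  have Rt': "\<And>a b c. (a,b) \<in> R \<Longrightarrow> (b,c) \<in> R \<Longrightarrow> (a,c) \<in> R" using Rt unfolding trans_def by blast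
  have Smem: "(a,b) \<in> S \<longleftrightarrow> (a,b) \<in> R \<or> (a \<in> D \<and> b = y) \<or> (a = y \<and> b \<in> Y' \<and> b \<notin> D)" for a b
    unfolding S_def by auto
  have Ry: "\<And>a. (a,y) \<notin> R" "\<And>a. (y,a) \<notin> R" using RY' yY' by auto
  have "trans S" unfolding trans_def
  proof (intro allI impI)
    fix a b c assume ab: "(a,b) \<in> S" and bc: "(b,c) \<in> S"
    show "(a,c) \<in> S"
    proof (cases "b = y")
      case True
      hence "a \<in> D" "c \<in> Y'" "c \<notin> D" using ab bc Smem[of a b] Smem[of b c] Ry DY' yY' by auto
      thus ?thesis using acR Smem by blast
    next
      case False
      hence abR: "(a,b) \<in> R \<or> (a = y \<and> b \<in> Y' \<and> b \<notin> D)" using ab Smem[of a b] by auto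
      have bcR: "(b,c) \<in> R \<or> (b \<in> D \<and> c = y)" using bc Smem[of b c] False by auto
      show ?thesis
      proof (cases "a = y")
        case True
        hence bnd: "b \<notin> D" "b \<in> Y'" using abR Ry by auto
        hence "(b,c) \<in> R" using bcR by auto
        hence "c \<notin> D" "c \<in> Y'" using Ddown bnd RY' by auto
        thus ?thesis using True Smem by auto
      next
        case False
        hence abR': "(a,b) \<in> R" using abR by auto
        show ?thesis
        proof (cases "(b,c) \<in> R")
          case True thus ?thesis using abR' Rt' Smem by blast
        next
          case False
          hence "b \<in> D" "c = y" using bcR by auto
          hence "a \<in> D" using Ddown abR' by blast
          thus ?thesis using \<open>c = y\<close> Smem by blast
        qed
      qed
    qed
  qed
  moreover have "\<forall>a. (a,a) \<notin> S" unfolding S_def using Rirr DY' yY' by auto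
  moreover have "\<forall>a\<in>Y. \<forall>b\<in>Y. a \<noteq> b \<longrightarrow> (a,b) \<in> S \<or> (b,a) \<in> S"
    unfolding S_def using Rtot unfolding Y'_def by blast
  ultimately have Sslo: "strict_linear_order_on Y S" unfolding slo_unfold by blast
  have SR: "\<And>a b. a \<in> Y' \<Longrightarrow> b \<in> Y' \<Longrightarrow> (a,b) \<in> S \<longleftrightarrow> (a,b) \<in> R"
    unfolding S_def using yY' by auto
  have nocross: "\<not> crosses ordX S (v,y) e'" if e': "e' \<in> E" for e'
  proof
    assume c: "crosses ordX S (v,y) e'"
    obtain x z where xz: "e' = (x,z)" by fastforce
    show False
    proof (cases "z = y")
      case True
      then show False using leaf e' xz c Xt unfolding crosses_def by auto
    next
      case False
      hence xzE: "(x,z) \<in> E'" using e' xz unfolding E'_def by auto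
      have zY: "z \<in> Y'" using E'Y'[OF xzE] .
      from c xz have "((v,x) \<in> ordX \<and> (z,y) \<in> S) \<or> ((x,v) \<in> ordX \<and> (y,z) \<in> S)"
        unfolding crosses_def by auto
      thus False
      proof
        assume h: "(v,x) \<in> ordX \<and> (z,y) \<in> S"
        hence "z \<in> D" unfolding S_def using RY' yY' zY by auto
        thus False using Dright[OF xzE] h by blast
      next
        assume h: "(x,v) \<in> ordX \<and> (y,z) \<in> S"
        hence "z \<notin> D" unfolding S_def using RY' yY' zY by auto
        thus False using Dleft[OF xzE] h by blast
      qed
    qed
  qed
  have "k_planar E k ordX S" unfolding k_planar_def
  proof
    fix e assume e: "e \<in> E"
    show "card {e' \<in> E. crosses ordX S e e'} \<le> k"
    proof (cases "snd e = y")
      case True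
      hence "e = (v,y)" using leaf e by (metis prod.collapse)
      hence "{e' \<in> E. crosses ordX S e e'} = {}" using nocross by blast
      thus ?thesis by (metis card.empty zero_le)
    next
      case False
      hence eE': "e \<in> E'" using e unfolding E'_def by auto
      have "{e' \<in> E. crosses ordX S e e'} \<subseteq> {e' \<in> E'. crosses ordX R e e'}"
      proof
        fix e' assume h: "e' \<in> {e' \<in> E. crosses ordX S e e'}"
        have "e' \<noteq> (v,y)"
        proof
          assume "e' = (v,y)"
          hence "crosses ordX S (v,y) e" using h unfolding crosses_def by auto
          thus False using nocross e by blast
        qed
        hence e'E': "e' \<in> E'" using h leaf unfolding E'_def by (metis (mono_tags, lifting) mem_Collect_eq prod.collapse)
        have "snd e \<in> Y'" "snd e' \<in> Y'" using E'Y' eE' e'E' by (metis prod.collapse)+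
        thus "e' \<in> {e' \<in> E'. crosses ordX R e e'}" using h e'E' SR unfolding crosses_def by auto
      qed
      hence "card {e' \<in> E. crosses ordX S e e'} \<le> card {e' \<in> E'. crosses ordX R e e'}"
        by (rule card_mono[rotated]) (use finE' in auto)
      also have "\<dots> \<le> k" using cr[OF eE'] .
      finally show ?thesis .
    qed
  qed
  thus ?thesis unfolding one_sided_k_planar_def using SY Sslo by blast
qed

theorem lemma3p2:
  fixes X Y :: "'a set" and E :: "('a \<times> 'a) set" and ordX :: "'a rel" and k :: nat
    and v y :: 'a
  assumes "bip_graph X Y E"
    and "ordX \<subseteq> X \<times> X" and "strict_linear_order_on X ordX"
    and "v \<in> X" and "degree E v > 2 * k + 2"
    and "y \<in> Y" and "(v, y) \<in> E" and "is_leaf E y"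
  shows "one_sided_k_planar X Y E ordX k \<longleftrightarrow>
         one_sided_k_planar X (Y - {y}) {e \<in> E. snd e \<noteq> y} ordX k"
proof
  assume "one_sided_k_planar X Y E ordX k"
  thus "one_sided_k_planar X (Y - {y}) {e \<in> E. snd e \<noteq> y} ordX k" using fwd[OF assms(1)] by blast
next
  assume op: "one_sided_k_planar X (Y - {y}) {e \<in> E. snd e \<noteq> y} ordX k"
  have EXY: "E \<subseteq> X \<times> Y" and XY: "X \<inter> Y = {}" and finE: "finite E"
    using assms(1) unfolding bip_graph_def by (meson finite_SigmaI finite_subset)+
  have e1: "{x. (x, v) \<in> E} = {}" using EXY XY assms(4) by auto
  have finNv: "finite {b. (v,b) \<in> E}"
  proof -
    have "{b. (v,b) \<in> E} \<subseteq> snd ` E" by force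
    thus ?thesis using finE finite_subset by blast
  qed
  have "card {b. (v,b) \<in> E} > 2*k+2" using assms(5) e1 unfolding degree_def by simp
  hence Ncard: "card ({b. (v,b) \<in> E} - {y}) \<ge> 2*k+2" using assms(7) finNv
    by (simp add: card_Diff_singleton)
  have e2: "{b. (y, b) \<in> E} = {}" using EXY XY assms(6) by auto
  have c1: "card {x. (x, y) \<in> E} = 1" using assms(8) e2 unfolding is_leaf_def degree_def by simp
  have leaf: "\<And>x. (x,y) \<in> E \<Longrightarrow> x = v"
  proof -
    fix x assume xy: "(x,y) \<in> E"
    obtain a where a: "{x. (x, y) \<in> E} = {a}" using c1 card_1_singletonE by blast
    have "x \<in> {a}" "v \<in> {a}" using xy assms(7) unfolding a[symmetric] by auto
    thus "x = v" by simp
  qed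
  show "one_sided_k_planar X Y E ordX k"
    using bwd[OF assms(1) assms(3) assms(4) Ncard leaf assms(7) assms(6) op] .
qed

end
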